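(* Let $\mathcal{X}$ be a family of subsets of $[d]$ such that at least one $\mathcal{X}$-matroid exists, and suppose the refinement procedure reaches the stationary function $v_{\mathcal{X}}$. If $v_{\mathcal{X}}$ is submodular, then $v_{\mathcal{X}}$ is the rank function of an $\mathcal{X}$-matroid, and this $\mathcal{X}$-matroid is the unique minimal $\mathcal{X}$-matroid with respect to the dependency order.
   Context: An $\mathcal{X}$-matroid is a matroid on $[d]$ in which every member of $\mathcal{X}$ is a circuit. Dependency order: $N_1\le N_2$ iff every dependent set of $N_1$ is dependent in $N_2$. A proper $\mathcal{X}$-sequence is a sequence $\mathcal{S}=(X_1,\dots,X_k)$ ($k\ge0$) of members of $\mathcal{X}$ with $X_i\not\subseteq\bigcup_{j<i}X_j$ for $i\ge2$; for $F\subseteq[d]$, $\mathrm{val}(F,\mathcal{S})=|F\cup\bigcup_{i=1}^kX_i|-k$ and $\mathrm{val}_{\mathcal{X}}(F)=\min_{\mathcal{S}}\mathrm{val}(F,\mathcal{S})$. Refinement procedure: $\mathrm{val}^1_{\mathcal{X}}=\mathrm{val}_{\mathcal{X}}$, and $\mathrm{val}^{n+1}_{\mathcal{X}}$ is obtained from $\mathrm{val}^n_{\mathcal{X}}$ by the first applicable rule: (i) if there are $A,B\subseteq[d]$, $x\in\mathcal{X}$ with $A\cap B\subseteq x$ and $\mathrm{val}^n(A\cup B)>\mathrm{val}^n(A)+\mathrm{val}^n(B)-\min\{|A\cap B|,|x|-1\}$, for one such choice lower $\mathrm{val}^{n+1}(A\cup B)$ to the right-hand side; (ii) else if there are $A\subsetneq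 B$ with $\mathrm{val}^n(A)>\mathrm{val}^n(B)$, for one such choice set $\mathrm{val}^{n+1}(A)=\mathrm{val}^n(B)$; (iii) else if there are $B\subsetneq A$ with $\mathrm{val}^n(A)>\mathrm{val}^n(B)+|A\setminus B|$, for one such choice set $\mathrm{val}^{n+1}(A)=\mathrm{val}^n(B)+|A\setminus B|$; (iv) else $\mathrm{val}^{n+1}=\mathrm{val}^n$; all other values unchanged. The stationary function is $v_{\mathcal{X}}$ (independent of the choices). A function $f:2^{[d]}\to\mathbb{Z}$ is submodular if $f(A\cup B)+f(A\cap B)\le f(A)+f(B)$ for all $A,B$. *)

theory Defs
  imports Main
begin

definition ground :: "nat \<Rightarrow> nat set" where
  "ground d = {1..d}"

definition matroid_indep :: "nat \<Rightarrow> (nat set \<Rightarrow> bool) \<Rightarrow> bool" where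
  "matroid_indep d I \<longleftrightarrow>
     I {} \<and>
     (\<forall>A. I A \<longrightarrow> A \<subseteq> ground d) \<and>
     (\<forall>A B. I B \<and> A \<subseteq> B \<longrightarrow> I A) \<and>
     (\<forall>A B. I A \<and> I B \<and> card A < card B \<longrightarrow> (\<exists>x\<in>B - A. I (insert x A)))"

definition dependent :: "nat \<Rightarrow> (nat set \<Rightarrow> bool) \<Rightarrow> nat set \<Rightarrow> bool" where
  "dependent d I A \<longleftrightarrow> A \<subseteq> ground d \<and> \<not> I A"

definition circuit :: "nat \<Rightarrow> (nat set \<Rightarrow> bool) \<Rightarrow> nat set \<Rightarrow> bool" where
  "circuit d I C \<longleftrightarrow> dependent d I C \<and> (\<forall>B. B \<subset> C \<longrightarrow> I B)"

definition X_matroid :: "nat \<Rightarrow> nat set set \<Rightarrow> (nat set \<Rightarrow> bool) \<Rightarrow> bool" where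
  "X_matroid d X I \<longleftrightarrow> matroid_indep d I \<and> (\<forall>C\<in>X. circuit d I C)"

definition dep_le :: "nat \<Rightarrow> (nat set \<Rightarrow> bool) \<Rightarrow> (nat set \<Rightarrow> bool) \<Rightarrow> bool" where
  "dep_le d I1 I2 \<longleftrightarrow> (\<forall>A. dependent d I1 A \<longrightarrow> dependent d I2 A)"

definition matroid_rank :: "(nat set \<Rightarrow> bool) \<Rightarrow> nat set \<Rightarrow> nat" where
  "matroid_rank I F = Max {card A | A. A \<subseteq> F \<and> I A}"

text \<open>Proper X-sequences (as lists, X_1 first) and the function val_X.\<close>
definition proper_seq :: "nat set set \<Rightarrow> nat set list \<Rightarrow> bool" where
  "proper_seq X xs \<longleftrightarrow> set xs \<subseteq> X \<and>
     (\<forall>i. 1 \<le> i \<and> i < length xs \<longrightarrow> \<not> (xs ! i \<subseteq> \<Union> (set (take i xs))))"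

definition val_seq :: "nat set \<Rightarrow> nat set list \<Rightarrow> int" where
  "val_seq F xs = int (card (F \<union> \<Union> (set xs))) - int (length xs)"

definition valX :: "nat set set \<Rightarrow> nat set \<Rightarrow> int" where
  "valX X F = Min {val_seq F xs | xs. proper_seq X xs}"

text \<open>One step of the refinement procedure (first applicable rule, one admissible choice).\<close>
definition rule_i_cond :: "nat \<Rightarrow> nat set set \<Rightarrow> (nat set \<Rightarrow> int) \<Rightarrow> nat set \<Rightarrow> nat set \<Rightarrow> nat set \<Rightarrow> bool" where
  "rule_i_cond d X f A B x \<longleftrightarrow> A \<subseteq> ground d \<and> B \<subseteq> ground d \<and> x \<in> X \<and> A \<inter> B \<subseteq> x \<and>
     f (A \<union> B) > f A + f B - min (int (card (A \<inter> B))) (int (card x) - 1)"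

definition rule_ii_cond :: "nat \<Rightarrow> (nat set \<Rightarrow> int) \<Rightarrow> nat set \<Rightarrow> nat set \<Rightarrow> bool" where
  "rule_ii_cond d f A B \<longleftrightarrow> A \<subset> B \<and> B \<subseteq> ground d \<and> f A > f B"

definition rule_iii_cond :: "nat \<Rightarrow> (nat set \<Rightarrow> int) \<Rightarrow> nat set \<Rightarrow> nat set \<Rightarrow> bool" where
  "rule_iii_cond d f A B \<longleftrightarrow> B \<subset> A \<and> A \<subseteq> ground d \<and> f A > f B + int (card (A - B))"

definition refine_step :: "nat \<Rightarrow> nat set set \<Rightarrow> (nat set \<Rightarrow> int) \<Rightarrow> (nat set \<Rightarrow> int) \<Rightarrow> bool" where
  "refine_step d X f g \<longleftrightarrow>
     (if \<exists>A B x. rule_i_cond d X f A B x then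
        (\<exists>A B x. rule_i_cond d X f A B x \<and>
           g = f(A \<union> B := f A + f B - min (int (card (A \<inter> B))) (int (card x) - 1)))
      else if \<exists>A B. rule_ii_cond d f A B then
        (\<exists>A B. rule_ii_cond d f A B \<and> g = f(A := f B))
      else if \<exists>A B. rule_iii_cond d f A B then
        (\<exists>A B. rule_iii_cond d f A B \<and> g = f(A := f B + int (card (A - B))))
      else g = f)"

definition refinement_run :: "nat \<Rightarrow> nat set set \<Rightarrow> (nat \<Rightarrow> nat set \<Rightarrow> int) \<Rightarrow> bool" where
  "refinement_run d X vs \<longleftrightarrow> vs 1 = valX X \<and> (\<forall>n\<ge>1. refine_step d X (vs n) (vs (Suc n)))"

definition submodular_on :: "nat \<Rightarrow> (nat set \<Rightarrow> int) \<Rightarrow> bool" where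
  "submodular_on d f \<longleftrightarrow> (\<forall>A B. A \<subseteq> ground d \<and> B \<subseteq> ground d \<longrightarrow>
      f (A \<union> B) + f (A \<inter> B) \<le> f A + f B)"

definition minimal_X_matroid :: "nat \<Rightarrow> nat set set \<Rightarrow> (nat set \<Rightarrow> bool) \<Rightarrow> bool" where
  "minimal_X_matroid d X I \<longleftrightarrow> X_matroid d X I \<and>
     (\<forall>J. X_matroid d X J \<and> dep_le d J I \<longrightarrow> J = I)"

end

theory Submission
  imports Defs
begin

lemma finite_ground[simp]: "finite (ground d)" by (simp add: ground_def)
lemma card_ground[simp]: "card (ground d) = d" by (simp add: ground_def)

lemma fin_g: "A \<subseteq> ground d \<Longrightarrow> finite A" using finite_subset finite_ground by metis

lemma mi_empty: "matroid_indep d J \<Longrightarrow> J {}" by (simp add: matroid_indep_def)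
lemma mi_ground: "matroid_indep d J \<Longrightarrow> J A \<Longrightarrow> A \<subseteq> ground d" by (simp add: matroid_indep_def)
lemma mi_subset: "matroid_indep d J \<Longrightarrow> J B \<Longrightarrow> A \<subseteq> B \<Longrightarrow> J A" unfolding matroid_indep_def by blast
lemma mi_aug: "matroid_indep d J \<Longrightarrow> J A \<Longrightarrow> J B \<Longrightarrow> card A < card B \<Longrightarrow> \<exists>x\<in>B - A. J (insert x A)"
  unfolding matroid_indep_def by blast
lemma mi_finite: "matroid_indep d J \<Longrightarrow> J A \<Longrightarrow> finite A"
  using mi_ground fin_g by metis

lemma rank_set_finite:
  assumes "matroid_indep d J"
  shows "finite {card A |A. A \<subseteq> F \<and> J A}"
proof -
  have "{card A |A. A \<subseteq> F \<and> J A} = card ` {A. A \<subseteq> F \<and> J A}" by blast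
  moreover have "{A. A \<subseteq> F \<and> J A} \<subseteq> Pow (ground d)" using mi_ground[OF assms] by blast
  ultimately show ?thesis by (metis finite_Pow_iff finite_ground finite_imageI finite_subset)
qed

lemma rank_ge:
  assumes "matroid_indep d J" "J T" "T \<subseteq> F"
  shows "card T \<le> matroid_rank J F"
  unfolding matroid_rank_def using assms rank_set_finite[OF assms(1)] by (intro Max_ge) auto

lemma rank_obtain:
  assumes "matroid_indep d J"
  obtains T where "T \<subseteq> F" "J T" "matroid_rank J F = card T"
proof -
  have "{card A |A. A \<subseteq> F \<and> J A} \<noteq> {}" using mi_empty[OF assms] by blast
  from Max_in[OF rank_set_finite[OF assms] this] show ?thesis using that unfolding matroid_rank_def by blast
qed

lemma extend:
  assumes M: "matroid_indep d J" and "J C" "C \<subseteq> F"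
  shows "\<exists>D. C \<subseteq> D \<and> D \<subseteq> F \<and> J D \<and> (\<forall>e\<in>F - D. \<not> J (insert e D))"
proof -
  define S where "S = {D. C \<subseteq> D \<and> D \<subseteq> F \<and> J D}"
  have "S \<subseteq> Pow (ground d)" using mi_ground[OF M] unfolding S_def by blast
  hence fS: "finite S" by (metis finite_Pow_iff finite_ground finite_subset)
  have "C \<in> S" using assms unfolding S_def by blast
  hence ne: "card ` S \<noteq> {}" by blast
  obtain D where D: "D \<in> S" "card D = Max (card ` S)" using Max_in[OF finite_imageI[OF fS] ne] by auto
  have JD: "J D" using D(1) unfolding S_def by auto
  show ?thesis
  proof (rule exI[of _ D], intro conjI ballI)
    show "C \<subseteq> D" "D \<subseteq> F" "J D" using D(1) unfolding S_def by auto
    fix e assume e: "e \<in> F - D"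
    show "\<not> J (insert e D)"
    proof
      assume Je: "J (insert e D)"
      hence "insert e D \<in> S" using D(1) e unfolding S_def by auto
      hence "card (insert e D) \<le> Max (card ` S)" using fS by (simp add: Max_ge)
      moreover have "card (insert e D) = card D + 1" using e mi_finite[OF M JD] by simp
      ultimately show False using D(2) by simp
    qed
  qed
qed

lemma rank_max:
  assumes M: "matroid_indep d J" and "B \<subseteq> F" "J B" and mx: "\<forall>e\<in>F - B. \<not> J (insert e B)"
  shows "matroid_rank J F = card B"
proof -
  obtain T where T: "T \<subseteq> F" "J T" "matroid_rank J F = card T" by (rule rank_obtain[OF M])
  have "card B \<le> card T" using rank_ge[OF M assms(3,2)] T(3) by simp
  moreover have "\<not> card B < card T"
  proof
    assume "card B < card T"
    then obtain x where "x \<in> T - B" "J (insert x B)" using mi_aug[OF M assms(3) T(2)] by blast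
    thus False using mx T(1) by blast
  qed
  ultimately show ?thesis using T(3) by simp
qed

lemma rank_mono:
  assumes M: "matroid_indep d J" "U \<subseteq> S" shows "matroid_rank J U \<le> matroid_rank J S"
proof -
  obtain T where T: "T \<subseteq> U" "J T" "matroid_rank J U = card T" by (rule rank_obtain[OF M(1)])
  thus ?thesis using rank_ge[OF M(1) T(2)] M(2) by auto
qed

lemma rank_le_card:
  assumes M: "matroid_indep d J" and "finite F" shows "matroid_rank J F \<le> card F"
proof -
  obtain T where T: "T \<subseteq> F" "J T" "matroid_rank J F = card T" by (rule rank_obtain[OF M])
  thus ?thesis using card_mono[OF assms(2) T(1)] by simp
qed

lemma rank_add:
  assumes M: "matroid_indep d J" and fS: "finite S"
  shows "matroid_rank J S \<le> matroid_rank J U + card (S - U)"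
proof -
  obtain D where D: "D \<subseteq> S" "J D" "matroid_rank J S = card D" by (rule rank_obtain[OF M])
  have "D = (D \<inter> U) \<union> (D - U)" by blast
  hence "card D \<le> card (D \<inter> U) + card (D - U)" by (metis card_Un_le)
  moreover have "card (D \<inter> U) \<le> matroid_rank J U"
    using rank_ge[OF M, of "D \<inter> U" U] mi_subset[OF M D(2)] by blast
  moreover have "card (D - U) \<le> card (S - U)" using D(1) fS by (intro card_mono) auto
  ultimately show ?thesis using D(3) by linarith
qed

lemma rank_submod:
  assumes M: "matroid_indep d J" and fA: "finite A" and fB: "finite B"
  shows "matroid_rank J (A \<union> B) + matroid_rank J (A \<inter> B) \<le> matroid_rank J A + matroid_rank J B"
proof -
  obtain C where C: "C \<subseteq> A \<inter> B" "J C" "matroid_rank J (A \<inter> B) = card C" by (rule rank_obtain[OF M])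
  obtain D where D: "C \<subseteq> D" "D \<subseteq> A \<union> B" "J D" "\<forall>e\<in>(A \<union> B) - D. \<not> J (insert e D)"
    using extend[OF M C(2), of "A \<union> B"] C(1) by blast
  have rD: "matroid_rank J (A \<union> B) = card D" by (rule rank_max[OF M D(2,3,4)])
  have fD: "finite D" using fA fB D(2) by (meson finite_UnI finite_subset)
  have eq: "card (D \<inter> A) + card (D \<inter> B) = card ((D \<inter> A) \<union> (D \<inter> B)) + card ((D \<inter> A) \<inter> (D \<inter> B))"
    using fD by (intro card_Un_Int) auto
  have u: "(D \<inter> A) \<union> (D \<inter> B) = D" using D(2) by blast
  have "card C \<le> card ((D \<inter> A) \<inter> (D \<inter> B))" using C(1) D(1) fD by (intro card_mono) auto
  moreover have "card (D \<inter> A) \<le> matroid_rank J A" using rank_ge[OF M, of "D \<inter> A" A] mi_subset[OF M D(3)] by blast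
  moreover have "card (D \<inter> B) \<le> matroid_rank J B" using rank_ge[OF M, of "D \<inter> B" B] mi_subset[OF M D(3)] by blast
  moreover have "card (D \<inter> A) + card (D \<inter> B) = card D + card ((D \<inter> A) \<inter> (D \<inter> B))"
    using eq unfolding u .
  ultimately show ?thesis using rD C(3) by linarith
qed

lemma circuit_props:
  assumes "circuit d J x"
  shows "x \<subseteq> ground d" "\<not> J x" "\<And>B. B \<subset> x \<Longrightarrow> J B"
  using assms unfolding circuit_def dependent_def by auto

lemma circuit_ne: "matroid_indep d J \<Longrightarrow> circuit d J x \<Longrightarrow> x \<noteq> {}"
  using circuit_props(2) mi_empty by blast

lemma circuit_rank_ge:
  assumes M: "matroid_indep d J" and c: "circuit d J x"
  shows "int (card x) - 1 \<le> int (matroid_rank J x)"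
proof -
  obtain e where e: "e \<in> x" using circuit_ne[OF M c] by blast
  have fx: "finite x" by (rule fin_g[OF circuit_props(1)[OF c]])
  have "J (x - {e})" using circuit_props(3)[OF c] e by blast
  hence "card (x - {e}) \<le> matroid_rank J x" using rank_ge[OF M] by blast
  moreover have "card (x - {e}) + 1 = card x" using e fx
    by (metis Suc_eq_plus1 card.remove)
  ultimately show ?thesis by linarith
qed

lemma circuit_rank:
  assumes M: "matroid_indep d J" and c: "circuit d J x" and fU: "finite U" and nx: "\<not> x \<subseteq> U"
  shows "matroid_rank J (U \<union> x) + 1 \<le> matroid_rank J U + card (x - U)"
proof -
  have fx: "finite x" by (rule fin_g[OF circuit_props(1)[OF c]])
  obtain e where e: "e \<in> x" "e \<notin> U" using nx by blast
  have Je: "J (x - {e})" using circuit_props(3)[OF c] e(1) by blast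
  define W where "W = (U \<union> x) - {e}"
  have "x - {e} \<subseteq> W" unfolding W_def by blast
  then obtain D where D: "x - {e} \<subseteq> D" "D \<subseteq> W" "J D" "\<forall>f\<in>W - D. \<not> J (insert f D)"
    using extend[OF M Je, of W] by blast
  have mx: "\<forall>f\<in>(U \<union> x) - D. \<not> J (insert f D)"
  proof
    fix f assume f: "f \<in> (U \<union> x) - D"
    show "\<not> J (insert f D)"
    proof (cases "f = e")
      case True
      have "x \<subseteq> insert e D" using D(1) by blast
      thus ?thesis using True circuit_props(2)[OF c] mi_subset[OF M] by blast
    next
      case False thus ?thesis using f D(4) unfolding W_def by blast
    qed
  qed
  have "D \<subseteq> U \<union> x" using D(2) unfolding W_def by blast
  hence r1: "matroid_rank J (U \<union> x) = card D" using rank_max[OF M _ D(3) mx] by blast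
  have r2: "matroid_rank J W = card D" by (rule rank_max[OF M D(2,3,4)])
  have fW: "finite W" unfolding W_def using fU fx by blast
  have "matroid_rank J W \<le> matroid_rank J U + card (W - U)" by (rule rank_add[OF M fW])
  moreover have WU: "W - U = (x - U) - {e}" unfolding W_def by blast
  have "card ((x - U) - {e}) + 1 = card (x - U)" using e fx
    by (metis DiffI Suc_eq_plus1 card.remove finite_Diff)
  hence "card (W - U) + 1 = card (x - U)" unfolding WU .
  ultimately show ?thesis using r1 r2 by linarith
qed

lemma proper_seq_snoc:
  assumes "proper_seq X (xs @ [x])"
  shows "proper_seq X xs" "x \<in> X" "xs \<noteq> [] \<Longrightarrow> \<not> x \<subseteq> \<Union>(set xs)"
proof -
  from assms have s: "set (xs @ [x]) \<subseteq> X" and p: "\<forall>i. 1 \<le> i \<and> i < length (xs @ [x]) \<longrightarrow> \<not> ((xs @ [x]) ! i \<subseteq> \<Union> (set (take i (xs @ [x]))))"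
    unfolding proper_seq_def by auto
  show "proper_seq X xs" unfolding proper_seq_def
  proof (intro conjI allI impI)
    show "set xs \<subseteq> X" using s by simp
    fix i assume i: "1 \<le> i \<and> i < length xs"
    thus "\<not> (xs ! i \<subseteq> \<Union> (set (take i xs)))" using p[rule_format, of i] by (simp add: nth_append)
  qed
  show "x \<in> X" using s by simp
  assume "xs \<noteq> []"
  hence "1 \<le> length xs" by (cases xs) auto
  thus "\<not> x \<subseteq> \<Union>(set xs)" using p[rule_format, of "length xs"] by simp
qed

lemma union_ground:
  assumes "\<forall>C\<in>X. circuit d J C" "proper_seq X xs"
  shows "\<Union>(set xs) \<subseteq> ground d"
proof -
  have "set xs \<subseteq> X" using assms(2) unfolding proper_seq_def by blast
  moreover have "\<forall>C\<in>X. C \<subseteq> ground d" using assms(1) unfolding circuit_def dependent_def by blast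
  ultimately show ?thesis by blast
qed

lemma seq_rank:
  assumes M: "matroid_indep d J" and circ: "\<forall>C\<in>X. circuit d J C" and p: "proper_seq X xs"
  shows "matroid_rank J (\<Union>(set xs)) + length xs \<le> card (\<Union>(set xs))"
  using p
proof (induction xs rule: rev_induct)
  case Nil
  then show ?case using rank_le_card[OF M, of "{}"] by simp
next
  case (snoc x xs)
  have px: "proper_seq X xs" "x \<in> X" using proper_seq_snoc[OF snoc.prems] by auto
  have IH: "matroid_rank J (\<Union>(set xs)) + length xs \<le> card (\<Union>(set xs))" using snoc.IH px(1) .
  have cx: "circuit d J x" using circ px(2) by blast
  let ?U = "\<Union>(set xs)"
  have nx: "\<not> x \<subseteq> ?U"
  proof (cases "xs = []")
    case True thus ?thesis using circuit_ne[OF M cx] by simp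
  next
    case False thus ?thesis using proper_seq_snoc(3)[OF snoc.prems] by blast
  qed
  have "?U \<subseteq> ground d" by (rule union_ground[OF circ px(1)])
  hence fU: "finite ?U" by (rule fin_g)
  have fx: "finite x" by (rule fin_g[OF circuit_props(1)[OF cx]])
  have cr: "matroid_rank J (?U \<union> x) + 1 \<le> matroid_rank J ?U + card (x - ?U)"
    by (rule circuit_rank[OF M cx fU nx])
  have "?U \<union> x = ?U \<union> (x - ?U)" by blast
  hence cu: "card (?U \<union> x) = card ?U + card (x - ?U)" using fU fx
    by (metis Diff_disjoint card_Un_disjoint finite_Diff Int_commute)
  have "\<Union>(set (xs @ [x])) = ?U \<union> x" by auto
  thus ?case using IH cr cu by simp
qed

lemma valX_ge:
  assumes M: "matroid_indep d J" and circ: "\<forall>C\<in>X. circuit d J C" and F: "F \<subseteq> ground d"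
    and p: "proper_seq X xs"
  shows "int (matroid_rank J F) \<le> val_seq F xs"
proof -
  let ?U = "\<Union>(set xs)"
  have Ug: "?U \<subseteq> ground d" by (rule union_ground[OF circ p])
  hence fU: "finite ?U" by (rule fin_g)
  have fF: "finite F" by (rule fin_g[OF F])
  have s: "matroid_rank J ?U + length xs \<le> card ?U" by (rule seq_rank[OF M circ p])
  have a: "matroid_rank J F \<le> matroid_rank J (F \<union> ?U)" using rank_mono[OF M] by blast
  have b: "matroid_rank J (F \<union> ?U) \<le> matroid_rank J ?U + card ((F \<union> ?U) - ?U)"
    using rank_add[OF M] fU fF by blast
  have "F \<union> ?U = ?U \<union> ((F \<union> ?U) - ?U)" by blast
  hence c: "card (F \<union> ?U) = card ?U + card ((F \<union> ?U) - ?U)" using fU fF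
    by (metis Diff_disjoint card_Un_disjoint finite_Diff finite_UnI Int_commute)
  have "matroid_rank J F + length xs \<le> card (F \<union> ?U)" using a b c s by linarith
  hence "int (matroid_rank J F) + int (length xs) \<le> int (card (F \<union> ?U))" by linarith
  thus ?thesis unfolding val_seq_def by linarith
qed

lemma proper_finite:
  assumes M: "matroid_indep d J" and circ: "\<forall>C\<in>X. circuit d J C"
  shows "finite {xs. proper_seq X xs}"
proof -
  have "{xs. proper_seq X xs} \<subseteq> {xs. set xs \<subseteq> X \<and> length xs \<le> d}"
  proof
    fix xs assume "xs \<in> {xs. proper_seq X xs}"
    hence p: "proper_seq X xs" by simp
    have "\<Union>(set xs) \<subseteq> ground d" by (rule union_ground[OF circ p])
    hence "card (\<Union>(set xs)) \<le> d" using card_mono[OF finite_ground] card_ground by metis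
    moreover have "matroid_rank J (\<Union>(set xs)) + length xs \<le> card (\<Union>(set xs))" by (rule seq_rank[OF M circ p])
    ultimately show "xs \<in> {xs. set xs \<subseteq> X \<and> length xs \<le> d}" using p unfolding proper_seq_def by auto
  qed
  moreover have "X \<subseteq> Pow (ground d)" using circ unfolding circuit_def dependent_def by blast
  hence "finite X" by (metis finite_Pow_iff finite_ground finite_subset)
  ultimately show ?thesis using finite_lists_length_le[of X d] by (meson finite_subset)
qed

lemma valX_props:
  assumes M: "matroid_indep d J" and circ: "\<forall>C\<in>X. circuit d J C"
  shows "F \<subseteq> ground d \<Longrightarrow> int (matroid_rank J F) \<le> valX X F"
    and "proper_seq X xs \<Longrightarrow> valX X F \<le> val_seq F xs"
proof -
  have eq: "{val_seq F xs | xs. proper_seq X xs} = val_seq F ` {xs. proper_seq X xs}" by blast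
  have fin: "finite {val_seq F xs | xs. proper_seq X xs}"
    unfolding eq using proper_finite[OF M circ] by blast
  have "proper_seq X []" unfolding proper_seq_def by simp
  hence ne: "{val_seq F xs | xs. proper_seq X xs} \<noteq> {}" by blast
  { assume F: "F \<subseteq> ground d"
    obtain xs where "proper_seq X xs" "valX X F = val_seq F xs"
      using Min_in[OF fin ne] unfolding valX_def by blast
    thus "int (matroid_rank J F) \<le> valX X F" using valX_ge[OF M circ F] by simp }
  { assume "proper_seq X xs"
    thus "valX X F \<le> val_seq F xs" unfolding valX_def using fin by (intro Min_le) auto }
qed

lemma refine_decr:
  assumes "refine_step d X f g" shows "g F \<le> f F"
  using assms unfolding refine_step_def rule_i_cond_def rule_ii_cond_def rule_iii_cond_def
  by (auto split: if_splits)

lemma refine_inv: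
  assumes M: "matroid_indep d J" and circ: "\<forall>C\<in>X. circuit d J C"
    and st: "refine_step d X f g" and inv: "\<forall>F. F \<subseteq> ground d \<longrightarrow> int (matroid_rank J F) \<le> f F"
  shows "\<forall>F. F \<subseteq> ground d \<longrightarrow> int (matroid_rank J F) \<le> g F"
proof -
  have c1: "int (matroid_rank J (A \<union> B)) \<le> f A + f B - min (int (card (A \<inter> B))) (int (card x) - 1)"
    if c: "rule_i_cond d X f A B x" for A B x
  proof -
    have A: "A \<subseteq> ground d" and B: "B \<subseteq> ground d" and xX: "x \<in> X" and ABx: "A \<inter> B \<subseteq> x"
      using c unfolding rule_i_cond_def by auto
    have fA: "finite A" by (rule fin_g[OF A])
    have fB: "finite B" by (rule fin_g[OF B])
    have sm: "matroid_rank J (A \<union> B) + matroid_rank J (A \<inter> B) \<le> matroid_rank J A + matroid_rank J B"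
      by (rule rank_submod[OF M fA fB])
    have cx: "circuit d J x" using circ xX by blast
    have m: "min (int (card (A \<inter> B))) (int (card x) - 1) \<le> int (matroid_rank J (A \<inter> B))"
    proof (cases "A \<inter> B = x")
      case True thus ?thesis using circuit_rank_ge[OF M cx] by simp
    next
      case False
      hence "J (A \<inter> B)" using circuit_props(3)[OF cx] ABx by blast
      hence "card (A \<inter> B) \<le> matroid_rank J (A \<inter> B)" using rank_ge[OF M] by blast
      thus ?thesis by linarith
    qed
    have "int (matroid_rank J A) \<le> f A" "int (matroid_rank J B) \<le> f B" using inv A B by blast+
    thus ?thesis using sm m by linarith
  qed
  have c2: "int (matroid_rank J A) \<le> f B" if c: "rule_ii_cond d f A B" for A B
  proof -
    have "A \<subseteq> B" "B \<subseteq> ground d" using c unfolding rule_ii_cond_def by auto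
    hence "matroid_rank J A \<le> matroid_rank J B" "int (matroid_rank J B) \<le> f B"
      using rank_mono[OF M] inv by blast+
    thus ?thesis by linarith
  qed
  have c3: "int (matroid_rank J A) \<le> f B + int (card (A - B))" if c: "rule_iii_cond d f A B" for A B
  proof -
    have "B \<subseteq> A" "A \<subseteq> ground d" using c unfolding rule_iii_cond_def by auto
    moreover have "finite A" using \<open>A \<subseteq> ground d\<close> by (rule fin_g)
    ultimately have "matroid_rank J A \<le> matroid_rank J B + card (A - B)" "B \<subseteq> ground d"
      using rank_add[OF M] by auto
    moreover have "int (matroid_rank J B) \<le> f B" using inv \<open>B \<subseteq> ground d\<close> by blast
    ultimately show ?thesis by linarith
  qed
  show ?thesis
  proof (intro allI impI)
    fix F assume F: "F \<subseteq> ground d"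
    have iF: "int (matroid_rank J F) \<le> f F" using inv F by blast
    show "int (matroid_rank J F) \<le> g F"
    proof (cases "\<exists>A B x. rule_i_cond d X f A B x")
      case True
      then obtain A B x where c: "rule_i_cond d X f A B x"
        and g: "g = f(A \<union> B := f A + f B - min (int (card (A \<inter> B))) (int (card x) - 1))"
        using st unfolding refine_step_def by auto
      show ?thesis using g c1[OF c] iF by (cases "F = A \<union> B") auto
    next
      case n1: False
      show ?thesis
      proof (cases "\<exists>A B. rule_ii_cond d f A B")
        case True
        then obtain A B where c: "rule_ii_cond d f A B" and g: "g = f(A := f B)"
          using st n1 unfolding refine_step_def by auto
        show ?thesis using g c2[OF c] iF by (cases "F = A") auto
      next
        case n2: False
        show ?thesis
        proof (cases "\<exists>A B. rule_iii_cond d f A B")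
          case True
          then obtain A B where c: "rule_iii_cond d f A B" and g: "g = f(A := f B + int (card (A - B)))"
            using st n1 n2 unfolding refine_step_def by auto
          show ?thesis using g c3[OF c] iF by (cases "F = A") auto
        next
          case n3: False
          have "g = f" using st n1 n2 n3 unfolding refine_step_def by auto
          thus ?thesis using iF by simp
        qed
      qed
    qed
  qed
qed

lemma stat_no_rules:
  assumes "refine_step d X f f"
  shows "\<not> rule_ii_cond d f A B" "\<not> rule_iii_cond d f A B"
proof -
  have n1: "\<not> (\<exists>A B x. rule_i_cond d X f A B x)"
  proof
    assume h: "\<exists>A B x. rule_i_cond d X f A B x"
    then obtain A B x where c: "rule_i_cond d X f A B x" and
      e: "f = f(A \<union> B := f A + f B - min (int (card (A \<inter> B))) (int (card x) - 1))"
      using assms unfolding refine_step_def by (metis (no_types, lifting))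
    from fun_cong[OF e, of "A \<union> B"] c show False unfolding rule_i_cond_def by simp
  qed
  have n2: "\<not> (\<exists>A B. rule_ii_cond d f A B)"
  proof
    assume h: "\<exists>A B. rule_ii_cond d f A B"
    then obtain A B where c: "rule_ii_cond d f A B" and e: "f = f(A := f B)"
      using assms n1 unfolding refine_step_def by (metis (no_types, lifting))
    from fun_cong[OF e, of A] c show False unfolding rule_ii_cond_def by simp
  qed
  have n3: "\<not> (\<exists>A B. rule_iii_cond d f A B)"
  proof
    assume h: "\<exists>A B. rule_iii_cond d f A B"
    then obtain A B where c: "rule_iii_cond d f A B" and e: "f = f(A := f B + int (card (A - B)))"
      using assms n1 n2 unfolding refine_step_def by (metis (no_types, lifting))
    from fun_cong[OF e, of A] c show False unfolding rule_iii_cond_def by simp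
  qed
  show "\<not> rule_ii_cond d f A B" "\<not> rule_iii_cond d f A B" using n2 n3 by auto
qed

lemma sub_ext:
  assumes sm: "submodular_on d v" and A: "A \<subseteq> ground d" and fS: "finite S"
  shows "S \<subseteq> ground d \<Longrightarrow> (\<forall>e\<in>S. v (insert e A) \<le> v A) \<Longrightarrow> v (A \<union> S) \<le> v A"
  using fS
proof (induction S rule: finite_induct)
  case empty thus ?case by simp
next
  case (insert e S)
  have h1: "v (A \<union> S) \<le> v A" using insert by blast
  have h2: "v (insert e A) \<le> v A" using insert.prems by blast
  have g: "A \<union> S \<subseteq> ground d" "insert e A \<subseteq> ground d" using insert.prems A by auto
  have "v ((A \<union> S) \<union> insert e A) + v ((A \<union> S) \<inter> insert e A) \<le> v (A \<union> S) + v (insert e A)"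
    using sm[unfolded submodular_on_def, rule_format, OF conjI[OF g]] .
  moreover have "(A \<union> S) \<union> insert e A = A \<union> insert e S" by blast
  moreover have "(A \<union> S) \<inter> insert e A = A" using insert.hyps(2) by blast
  ultimately show ?case using h1 h2 by simp
qed

lemma dep_antisym:
  assumes "matroid_indep d I" "matroid_indep d J" "dep_le d I J" "dep_le d J I"
  shows "I = J"
proof
  fix A show "I A = J A"
  proof (cases "A \<subseteq> ground d")
    case True thus ?thesis using assms(3,4) unfolding dep_le_def dependent_def by blast
  next
    case False thus ?thesis using mi_ground[OF assms(1)] mi_ground[OF assms(2)] by blast
  qed
qed



theorem mainTheorem17:
  fixes d :: nat and X :: "nat set set" and vs :: "nat \<Rightarrow> nat set \<Rightarrow> int" and v :: "nat set \<Rightarrow> int"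
  assumes X_sub: "\<forall>x\<in>X. x \<subseteq> ground d"
    and exists_Xm: "\<exists>I. X_matroid d X I"
    and run: "refinement_run d X vs"
    and stat: "\<exists>N\<ge>1. \<forall>n\<ge>N. vs n = v"
    and subm: "submodular_on d v"
  shows "\<exists>I. X_matroid d X I \<and> (\<forall>F. F \<subseteq> ground d \<longrightarrow> v F = int (matroid_rank I F))
             \<and> minimal_X_matroid d X I
             \<and> (\<forall>J. minimal_X_matroid d X J \<longrightarrow> J = I)"
proof -
  obtain J0 where J0: "X_matroid d X J0" using exists_Xm by blast
  have M0: "matroid_indep d J0" and C0: "\<forall>C\<in>X. circuit d J0 C" using J0 unfolding X_matroid_def by auto
  obtain N where N: "N \<ge> 1" "\<forall>n\<ge>N. vs n = v" using stat by blast
  have vN: "vs N = v" using N by simp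
  have vSN: "vs (Suc N) = v" using N by simp
  have rs: "refine_step d X v v" using run N(1) vN vSN unfolding refinement_run_def by metis
  have v1: "vs 1 = valX X" using run unfolding refinement_run_def by simp
  have stepn: "refine_step d X (vs m) (vs (Suc m))" if "1 \<le> m" for m
    using run that unfolding refinement_run_def by simp
  have decr: "vs n F \<le> vs 1 F" if "1 \<le> n" for n F
    using that
  proof (induction n rule: dec_induct)
    case base show ?case by simp
  next
    case (step m)
    have "vs (Suc m) F \<le> vs m F" by (rule refine_decr[OF stepn[OF step.hyps(1)]])
    thus ?case using step.IH by simp
  qed
  have inv: "\<forall>F. F \<subseteq> ground d \<longrightarrow> int (matroid_rank J F) \<le> vs n F"
    if n: "1 \<le> n" and XJ: "X_matroid d X J" for n J
  proof -
    have MJ: "matroid_indep d J" and CJ: "\<forall>C\<in>X. circuit d J C" using XJ unfolding X_matroid_def by auto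
    from n show ?thesis
    proof (induction n rule: dec_induct)
      case base
      show ?case using valX_props(1)[OF MJ CJ] v1 by simp
    next
      case (step m)
      show ?case by (rule refine_inv[OF MJ CJ stepn[OF step.hyps(1)] step.IH])
    qed
  qed
  have vge: "int (matroid_rank J F) \<le> v F" if "X_matroid d X J" "F \<subseteq> ground d" for J F
    using inv[OF N(1) that(1)] that(2) vN by simp
  have mono: "v A \<le> v B" if "A \<subseteq> B" "B \<subseteq> ground d" for A B
  proof (cases "A = B")
    case True thus ?thesis by simp
  next
    case False
    hence "A \<subset> B" using that by blast
    thus ?thesis using stat_no_rules(1)[OF rs, of A B] that unfolding rule_ii_cond_def by auto
  qed
  have unit: "v A \<le> v B + int (card (A - B))" if "B \<subseteq> A" "A \<subseteq> ground d" for A B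
  proof (cases "A = B")
    case True thus ?thesis by simp
  next
    case False
    hence "B \<subset> A" using that by blast
    thus ?thesis using stat_no_rules(2)[OF rs, of A B] that unfolding rule_iii_cond_def by auto
  qed
  have pe: "proper_seq X []" unfolding proper_seq_def by simp
  have v0: "v {} = 0"
  proof -
    have "v {} \<le> vs 1 {}" using decr[OF N(1)] vN by metis
    also have "\<dots> \<le> val_seq {} []" using v1 valX_props(2)[OF M0 C0 pe] by simp
    finally have "v {} \<le> 0" by (simp add: val_seq_def)
    moreover have "0 \<le> v {}" using vge[OF J0, of "{}"] by simp
    ultimately show ?thesis by simp
  qed
  have vle: "v A \<le> int (card A)" if "A \<subseteq> ground d" for A
    using unit[of "{}" A] that v0 by simp
  have vx: "v x \<le> int (card x) - 1" if "x \<in> X" for x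
  proof -
    have px: "proper_seq X [x]" unfolding proper_seq_def using that by simp
    have "v x \<le> vs 1 x" using decr[OF N(1)] vN by metis
    also have "\<dots> \<le> val_seq x [x]" using v1 valX_props(2)[OF M0 C0 px] by simp
    finally show ?thesis by (simp add: val_seq_def)
  qed
  define I0 where "I0 = (\<lambda>A. A \<subseteq> ground d \<and> v A = int (card A))"
  have key: "v (insert e A) \<le> v A" if "I0 A" "e \<in> ground d" "e \<notin> A" "\<not> I0 (insert e A)" for e A
  proof -
    have A: "A \<subseteq> ground d" "v A = int (card A)" using that(1) unfolding I0_def by auto
    have fA: "finite A" by (rule fin_g[OF A(1)])
    have g: "insert e A \<subseteq> ground d" using A that(2) by blast
    have "insert e A - A = {e}" using that(3) by blast
    hence "v (insert e A) \<le> v A + 1" using unit[of A "insert e A"] g by auto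
    moreover have "v (insert e A) \<noteq> int (card A) + 1"
      using that(4) g fA that(3) unfolding I0_def by simp
    ultimately show ?thesis using A(2) by linarith
  qed
  have MI: "matroid_indep d I0"
    unfolding matroid_indep_def
  proof (intro conjI allI impI)
    show "I0 {}" unfolding I0_def using v0 by simp
    fix A assume "I0 A" thus "A \<subseteq> ground d" unfolding I0_def by simp
  next
    fix A B assume h: "I0 B \<and> A \<subseteq> B"
    hence B: "B \<subseteq> ground d" "v B = int (card B)" unfolding I0_def by auto
    have A: "A \<subseteq> ground d" using h B by blast
    have fB: "finite B" by (rule fin_g[OF B(1)])
    have "card B = card A + card (B - A)" using fB h
      by (metis card_Diff_subset card_mono diff_add_inverse2 finite_subset le_add_diff_inverse add.commute)
    moreover have "v B \<le> v A + int (card (B - A))" using unit[of A B] h B by blast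
    moreover have "v A \<le> int (card A)" by (rule vle[OF A])
    ultimately show "I0 A" using A B unfolding I0_def by simp
  next
    fix A B assume h: "I0 A \<and> I0 B \<and> card A < card B"
    have A: "A \<subseteq> ground d" "v A = int (card A)" and B: "B \<subseteq> ground d" "v B = int (card B)"
      using h unfolding I0_def by auto
    show "\<exists>x\<in>B - A. I0 (insert x A)"
    proof (rule ccontr)
      assume "\<not> ?thesis"
      hence "\<forall>e\<in>B - A. v (insert e A) \<le> v A" using key h B(1) by blast
      hence "v (A \<union> (B - A)) \<le> v A"
        using sub_ext[OF subm A(1) fin_g[of "B - A" d]] B(1) by blast
      moreover have "A \<union> (B - A) = A \<union> B" by blast
      moreover have "v B \<le> v (A \<union> B)" using mono A(1) B(1) by blast
      ultimately show False using A(2) B(2) h by simp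
    qed
  qed
  have rk: "v F = int (matroid_rank I0 F)" if F: "F \<subseteq> ground d" for F
  proof -
    obtain T where T: "T \<subseteq> F" "I0 T" "matroid_rank I0 F = card T" by (rule rank_obtain[OF MI])
    have fT: "finite T" by (rule mi_finite[OF MI T(2)])
    have "\<forall>e\<in>F - T. v (insert e T) \<le> v T"
    proof
      fix e assume e: "e \<in> F - T"
      have "\<not> I0 (insert e T)"
      proof
        assume "I0 (insert e T)"
        hence "card (insert e T) \<le> matroid_rank I0 F" using rank_ge[OF MI] e T(1) by blast
        thus False using T(3) fT e by simp
      qed
      thus "v (insert e T) \<le> v T" using key[OF T(2)] e F by blast
    qed
    hence "v (T \<union> (F - T)) \<le> v T" using sub_ext[OF subm _ fin_g[of "F - T" d]] T(1) F by blast
    moreover have "T \<union> (F - T) = F" using T(1) by blast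
    moreover have "v T \<le> v F" using mono T(1) F by blast
    moreover have "v T = int (card T)" using T(2) unfolding I0_def by simp
    ultimately show ?thesis using T(3) by simp
  qed
  have XI: "X_matroid d X I0"
    unfolding X_matroid_def
  proof (intro conjI ballI)
    show "matroid_indep d I0" by (rule MI)
    fix x assume x: "x \<in> X"
    have xg: "x \<subseteq> ground d" using X_sub x by blast
    show "circuit d I0 x" unfolding circuit_def dependent_def
    proof (intro conjI allI impI)
      show "x \<subseteq> ground d" by (rule xg)
      show "\<not> I0 x" using vx[OF x] unfolding I0_def by simp
      fix B assume B: "B \<subset> x"
      have Bg: "B \<subseteq> ground d" using B xg by blast
      have "J0 B" using circuit_props(3)[OF bspec[OF C0 x] B] .
      hence "card B \<le> matroid_rank J0 B" using rank_ge[OF M0] by blast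
      hence "int (card B) \<le> v B" using vge[OF J0 Bg] by linarith
      thus "I0 B" using vle[OF Bg] Bg unfolding I0_def by simp
    qed
  qed
  have below: "dep_le d I0 J" if XJ: "X_matroid d X J" for J
    unfolding dep_le_def
  proof (intro allI impI)
    fix A assume "dependent d I0 A"
    hence A: "A \<subseteq> ground d" "\<not> I0 A" unfolding dependent_def by auto
    have MJ: "matroid_indep d J" using XJ unfolding X_matroid_def by auto
    have lt: "v A < int (card A)" using A vle[OF A(1)] unfolding I0_def by auto
    have "\<not> J A"
    proof
      assume "J A"
      hence "card A \<le> matroid_rank J A" using rank_ge[OF MJ] by blast
      thus False using vge[OF XJ A(1)] lt by linarith
    qed
    thus "dependent d J A" using A unfolding dependent_def by simp
  qed
  have minI: "minimal_X_matroid d X I0"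
    unfolding minimal_X_matroid_def
  proof (intro conjI allI impI)
    show "X_matroid d X I0" by (rule XI)
    fix J assume h: "X_matroid d X J \<and> dep_le d J I0"
    show "J = I0"
      using dep_antisym[of d J I0] h below[of J] MI unfolding X_matroid_def by blast
  qed
  show ?thesis
  proof (rule exI[of _ I0], intro conjI allI impI)
    show "X_matroid d X I0" by (rule XI)
    show "minimal_X_matroid d X I0" by (rule minI)
    fix F assume "F \<subseteq> ground d" thus "v F = int (matroid_rank I0 F)" by (rule rk)
  next
    fix J assume "minimal_X_matroid d X J"
    thus "J = I0" using XI below unfolding minimal_X_matroid_def by blast
  qed
qed

end
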